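(* Let $U\subseteq\mathbb{R}$ be open, let $\widetilde{H}\subseteq U$ be Lebesgue measurable and let $\varepsilon>0$. Then there is an open set $H\subseteq U$ such that $|\widetilde{H}\setminus H|=0$ and, for every bounded connected component $I=(a,b)$ of $H$, the point $a$ is a right density point of $\widetilde{H}$, the point $b$ is a left density point of $\widetilde{H}$, and for every $r\in(0,b-a)$ $$\max\Big\{\frac{|(a,a+r)\setminus\widetilde{H}|}{r},\ \frac{|(b-r,b)\setminus\widetilde{H}|}{r}\Big\}<\varepsilon.$$
   Context: $|A|$ denotes Lebesgue measure. A point $x$ is a right (resp. left) density point of a set $A$ if for every sequence of intervals $I_n=[x,x+r_n]$ (resp. $I_n=[x-r_n,x]$) with $r_n\searrow0$ we have $|A\cap I_n|/|I_n|\to1$. *)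

theory Defs
  imports "HOL-Analysis.Analysis"
begin

definition right_density_point :: "real set \<Rightarrow> real \<Rightarrow> bool" where
  "right_density_point A x \<longleftrightarrow>
     (\<forall>r::nat \<Rightarrow> real. (\<forall>n. 0 < r n) \<and> decseq r \<and> r \<longlonglongrightarrow> 0 \<longrightarrow>
        (\<lambda>n. measure lebesgue (A \<inter> {x .. x + r n}) / r n) \<longlonglongrightarrow> 1)"

definition left_density_point :: "real set \<Rightarrow> real \<Rightarrow> bool" where
  "left_density_point A x \<longleftrightarrow>
     (\<forall>r::nat \<Rightarrow> real. (\<forall>n. 0 < r n) \<and> decseq r \<and> r \<longlonglongrightarrow> 0 \<longrightarrow>
        (\<lambda>n. measure lebesgue (A \<inter> {x - r n .. x}) / r n) \<longlonglongrightarrow> 1)"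

end

theory Submission
  imports Defs
begin

lemma countable_negl: "countable (S::real set) \<Longrightarrow> negligible S"
proof -
  assume "countable S"
  moreover have "\<And>T. T \<in> (\<lambda>x. {x}) ` S \<Longrightarrow> negligible T" by blast
  ultimately have "negligible (\<Union>((\<lambda>x. {x}) ` S))"
    by (intro negligible_countable_Union) simp_all
  then show ?thesis by simp
qed

lemma right_isolated_countable:
  fixes E :: "real set"
  shows "countable {x\<in>E. \<exists>h>0. \<forall>c\<in>E. \<not> (x < c \<and> c < x + h)}"
proof -
  define S where "S = {x\<in>E. \<exists>h>0. \<forall>c\<in>E. \<not> (x < c \<and> c < x + h)}"
  have "\<forall>x\<in>S. \<exists>q. q \<in> \<rat> \<and> x < q \<and> (\<forall>c\<in>E. \<not> (x < c \<and> c \<le> q))"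
  proof
    fix x assume "x \<in> S"
    then obtain h where h: "h > 0" "\<forall>c\<in>E. \<not> (x < c \<and> c < x + h)" unfolding S_def by blast
    have "x < x + h" using h(1) by simp
    from Rats_dense_in_real[OF this] obtain q where q: "q \<in> \<rat>" "x < q" "q < x + h" by blast
    have "\<forall>c\<in>E. \<not> (x < c \<and> c \<le> q)"
    proof
      fix c assume "c \<in> E"
      then have "\<not> (x < c \<and> c < x + h)" using h(2) by blast
      then show "\<not> (x < c \<and> c \<le> q)" using q(3) by linarith
    qed
    then show "\<exists>q. q \<in> \<rat> \<and> x < q \<and> (\<forall>c\<in>E. \<not> (x < c \<and> c \<le> q))" using q by blast
  qed
  then have "\<exists>q. \<forall>x\<in>S. q x \<in> \<rat> \<and> x < q x \<and> (\<forall>c\<in>E. \<not> (x < c \<and> c \<le> q x))"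
    by (rule bchoice)
  then obtain q where q: "\<forall>x\<in>S. q x \<in> \<rat> \<and> x < q x \<and> (\<forall>c\<in>E. \<not> (x < c \<and> c \<le> q x))"
    by (elim exE)
  have mono: "q x < q y" if "x \<in> S" "y \<in> S" "x < y" for x y
  proof -
    have "y \<in> E" using that(2) unfolding S_def by blast
    then have "\<not> (x < y \<and> y \<le> q x)" using q that(1) by blast
    then have "q x < y" using that(3) by linarith
    moreover have "y < q y" using q that(2) by blast
    ultimately show ?thesis by linarith
  qed
  have "inj_on q S"
  proof (rule inj_onI)
    fix x y assume xy: "x \<in> S" "y \<in> S" "q x = q y"
    show "x = y"
    proof (rule ccontr)
      assume "x \<noteq> y"
      then have "x < y \<or> y < x" by linarith
      moreover have "x < y \<Longrightarrow> False" using mono[OF xy(1) xy(2)] xy(3) by simp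
      moreover have "y < x \<Longrightarrow> False" using mono[OF xy(2) xy(1)] xy(3) by simp
      ultimately show False by blast
    qed
  qed
  moreover have "countable (q ` S)"
  proof -
    have "q ` S \<subseteq> \<rat>" using q by blast
    then show ?thesis using countable_rat countable_subset by blast
  qed
  ultimately have "countable S" using countable_image_inj_on by blast
  then show ?thesis unfolding S_def .
qed

lemma left_isolated_countable:
  fixes E :: "real set"
  shows "countable {x\<in>E. \<exists>h>0. \<forall>c\<in>E. \<not> (x - h < c \<and> c < x)}"
proof -
  define S where "S = {x\<in>uminus ` E. \<exists>h>0. \<forall>c\<in>uminus ` E. \<not> (x < c \<and> c < x + h)}"
  have sub: "{x\<in>E. \<exists>h>0. \<forall>c\<in>E. \<not> (x - h < c \<and> c < x)} \<subseteq> uminus ` S"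
  proof
    fix x assume "x \<in> {x\<in>E. \<exists>h>0. \<forall>c\<in>E. \<not> (x - h < c \<and> c < x)}"
    then obtain h where h: "x \<in> E" "h > 0" "\<forall>c\<in>E. \<not> (x - h < c \<and> c < x)" by blast
    have "\<forall>c\<in>uminus ` E. \<not> (-x < c \<and> c < -x + h)"
    proof
      fix c assume "c \<in> uminus ` E"
      then obtain c' where c': "c' \<in> E" "c = -c'" by blast
      then have "\<not> (x - h < c' \<and> c' < x)" using h(3) by blast
      then show "\<not> (-x < c \<and> c < -x + h)" using c'(2) by linarith
    qed
    moreover have "-x \<in> uminus ` E" using h(1) by blast
    ultimately have "-x \<in> S" unfolding S_def using h(2) by blast
    then show "x \<in> uminus ` S" by (metis image_eqI minus_minus)
  qed
  have "countable S" unfolding S_def by (rule right_isolated_countable)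
  then have "countable (uminus ` S)" by simp
  then show ?thesis using sub countable_subset by blast
qed


lemma arith_eta: fixes e \<eta> :: real assumes "e > 0" shows "\<eta> * e / (2 + e) + 2/e * (\<eta> * e / (2 + e)) = \<eta>"
proof -
  have "2/e * (\<eta> * e / (2 + e)) = 2 * \<eta> / (2 + e)" using assms by simp
  moreover have "\<eta> * e / (2 + e) + 2 * \<eta> / (2 + e) = \<eta> * (2 + e) / (2 + e)"
    by (simp add: add_divide_distrib[symmetric] algebra_simps)
  moreover have "\<eta> * (2 + e) / (2 + e) = \<eta>" using assms by simp
  ultimately show ?thesis by linarith
qed

lemma bound_lemma:
  fixes C' :: "(real\<times>real) set" and A Op :: "real set" and e :: real
  assumes fin: "finite C'" and A: "A \<in> sets lebesgue" and OA: "Op - A \<in> lmeasurable" and e: "e>0"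
   and disj: "pairwise (\<lambda>i j. disjnt (cball (fst i) (snd i)) (cball (fst j) (snd j))) C'"
   and CK: "\<And>i. i \<in> C' \<Longrightarrow> 0 < snd i \<and> cball (fst i) (snd i) \<subseteq> Op \<and> measure lebesgue (cball (fst i) (snd i) - A) > e * snd i"
  shows "measure lebesgue (\<Union>i\<in>C'. cball (fst i) (snd i)) \<le> 2/e * measure lebesgue (Op - A)"
proof -
  have "measure lebesgue (\<Union>i\<in>C'. cball (fst i) (snd i)) \<le> (\<Sum>i\<in>C'. measure lebesgue (cball (fst i) (snd i)))"
    by (rule measure_UNION_le[OF fin]) simp
  also have "\<dots> \<le> (\<Sum>i\<in>C'. 2/e * measure lebesgue (cball (fst i) (snd i) - A))"
  proof (rule sum_mono)
    fix i assume "i \<in> C'"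
    then have i: "0 < snd i" "measure lebesgue (cball (fst i) (snd i) - A) > e * snd i" using CK by auto
    have "measure lebesgue (cball (fst i) (snd i)) = 2 * snd i"
      using i(1) by (simp add: cball_eq_atLeastAtMost)
    also have "\<dots> \<le> 2/e * measure lebesgue (cball (fst i) (snd i) - A)"
    proof -
      have "e * snd i \<le> measure lebesgue (cball (fst i) (snd i) - A)" using i(2) by linarith
      then have "snd i \<le> measure lebesgue (cball (fst i) (snd i) - A) / e" using e by (simp add: pos_le_divide_eq mult.commute)
      then show ?thesis by simp
    qed
    finally show "measure lebesgue (cball (fst i) (snd i)) \<le> 2/e * measure lebesgue (cball (fst i) (snd i) - A)" .
  qed
  also have "\<dots> = 2/e * measure lebesgue (\<Union>i\<in>C'. cball (fst i) (snd i) - A)"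
  proof -
    have "measure lebesgue (\<Union>i\<in>C'. cball (fst i) (snd i) - A) = (\<Sum>i\<in>C'. measure lebesgue (cball (fst i) (snd i) - A))"
    proof (rule measure_finite_Union)
      show "finite C'" by fact
      show "(\<lambda>i. cball (fst i) (snd i) - A) ` C' \<subseteq> sets lebesgue" using A by auto
      show "disjoint_family_on (\<lambda>i. cball (fst i) (snd i) - A) C'"
        unfolding disjoint_family_on_def
      proof (intro ballI impI)
        fix i j assume "i \<in> C'" "j \<in> C'" "i \<noteq> j"
        then have "disjnt (cball (fst i) (snd i)) (cball (fst j) (snd j))"
          using disj unfolding pairwise_def by blast
        then show "(cball (fst i) (snd i) - A) \<inter> (cball (fst j) (snd j) - A) = {}"
          unfolding disjnt_def by blast
      qed
      show "emeasure lebesgue (cball (fst i) (snd i) - A) \<noteq> \<infinity>" for i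
      proof -
        have "cball (fst i) (snd i) - A \<in> lmeasurable"
          using A by (intro fmeasurable_Diff) auto
        then show ?thesis using fmeasurableD2 by (metis infinity_ennreal_def)
      qed
    qed
    then show ?thesis by (simp add: sum_distrib_left)
  qed
  also have "\<dots> \<le> 2/e * measure lebesgue (Op - A)"
  proof -
    have "(\<Union>i\<in>C'. cball (fst i) (snd i) - A) \<subseteq> Op - A" using CK by blast
    moreover have "(\<Union>i\<in>C'. cball (fst i) (snd i) - A) \<in> sets lebesgue" by (intro sets.finite_UN sets.Diff fin A) auto
    ultimately have "measure lebesgue (\<Union>i\<in>C'. cball (fst i) (snd i) - A) \<le> measure lebesgue (Op - A)"
      using OA by (intro measure_mono_fmeasurable) auto
    then show ?thesis using e by (intro mult_left_mono) auto
  qed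
  finally show ?thesis .
qed

lemma N_negl:
  fixes A :: "real set" and e :: real and m :: real
  assumes A: "A \<in> sets lebesgue" and e: "e > 0"
  shows "negligible {x\<in>A \<inter> ball 0 m. \<forall>\<rho>>0. \<exists>r. 0<r \<and> r<\<rho> \<and> measure lebesgue (cball x r - A) > e*r}"
proof -
  define E where "E = {x\<in>A \<inter> ball 0 m. \<forall>\<rho>>0. \<exists>r. 0<r \<and> r<\<rho> \<and> measure lebesgue (cball x r - A) > e*r}"
  have "\<forall>\<eta>>0. \<exists>T. E \<subseteq> T \<and> T \<in> lmeasurable \<and> measure lebesgue T \<le> \<eta>"
  proof (intro allI impI)
    fix \<eta>::real assume \<eta>: "\<eta>>0"
    define \<eta>' where "\<eta>' = \<eta> * e / (2 + e)"
    have \<eta>': "\<eta>' > 0" using \<eta> e by (simp add: \<eta>'_def)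
    obtain Op where Op: "open Op" "A \<subseteq> Op" "(Op - A) \<in> lmeasurable" "emeasure lebesgue (Op - A) < ennreal \<eta>'"
      using sets_lebesgue_outer_open[OF A \<eta>'] by blast
    have mOA: "measure lebesgue (Op - A) < \<eta>'"
      using Op(3,4) \<eta>' by (simp add: emeasure_eq_measure2 ennreal_less_iff)
    define Op' where "Op' = Op \<inter> ball 0 (m+1)"
    have "open Op'" using Op(1) by (simp add: Op'_def open_Int)
    define K where "K = {(x,r). x \<in> E \<and> 0 < r \<and> cball x r \<subseteq> Op' \<and> measure lebesgue (cball x r - A) > e*r}"
    have fine: "\<exists>i. i \<in> K \<and> x \<in> cball (fst i) (snd i) \<and> snd i < d" if "x \<in> E" "0 < d" for x d
    proof -
      have "x \<in> Op'" using that Op(2) by (auto simp: E_def Op'_def)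
      then obtain \<delta> where \<delta>: "\<delta>>0" "cball x \<delta> \<subseteq> Op'" using open_contains_cball \<open>open Op'\<close> by blast
      obtain r where r: "0<r" "r < min \<delta> d" "measure lebesgue (cball x r - A) > e*r"
      proof -
        have "min \<delta> d > 0" using \<delta> \<open>0 < d\<close> by simp
        moreover have "\<forall>\<rho>>0. \<exists>r. 0<r \<and> r<\<rho> \<and> measure lebesgue (cball x r - A) > e*r"
          using \<open>x \<in> E\<close> unfolding E_def by blast
        ultimately obtain r where "0<r" "r < min \<delta> d" "measure lebesgue (cball x r - A) > e*r"
          by blast
        then show ?thesis using that by blast
      qed
      have "cball x r \<subseteq> cball x \<delta>" using r by (intro subset_cball) simp
      then have "cball x r \<subseteq> Op'" using \<delta> by blast
      then show ?thesis using r that by (intro exI[of _ "(x,r)"]) (auto simp: K_def)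
    qed
    obtain C where C: "countable C" "C \<subseteq> K"
      "pairwise (\<lambda>i j. disjnt (cball (fst i) (snd i)) (cball (fst j) (snd j))) C"
      "negligible (E - (\<Union>i\<in>C. cball (fst i) (snd i)))"
    proof -
      have rK: "\<And>i. i \<in> K \<Longrightarrow> 0 < snd i" by (auto simp: K_def)
      show ?thesis using Vitali_covering_theorem_cballs[of K snd E fst, OF rK fine] that by blast
    qed
    define D where "D = (\<lambda>i. cball (fst i) (snd i)) ` C"
    have CK: "i \<in> C \<Longrightarrow> 0 < snd i \<and> cball (fst i) (snd i) \<subseteq> Op' \<and> measure lebesgue (cball (fst i) (snd i) - A) > e * snd i" for i
    proof -
      assume "i \<in> C"
      then have "i \<in> K" using C(2) by blast
      then show ?thesis unfolding K_def by (cases i) simp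
    qed
    have bound: "measure lebesgue (\<Union>D') \<le> 2/e * \<eta>'" if "D' \<subseteq> D" "finite D'" for D'
    proof -
      obtain C' where C': "C' \<subseteq> C" "finite C'" "D' = (\<lambda>i. cball (fst i) (snd i)) ` C'"
        using finite_subset_image[OF \<open>finite D'\<close> \<open>D' \<subseteq> D\<close>[unfolded D_def]] by blast
      have pw: "pairwise (\<lambda>i j. disjnt (cball (fst i) (snd i)) (cball (fst j) (snd j))) C'"
        using pairwise_subset[OF C(3) C'(1)] .
      have CK': "\<And>i. i \<in> C' \<Longrightarrow> 0 < snd i \<and> cball (fst i) (snd i) \<subseteq> Op \<and> measure lebesgue (cball (fst i) (snd i) - A) > e * snd i"
      proof -
        fix i assume "i \<in> C'"
        then have "i \<in> C" using C'(1) by blast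
        from CK[OF this] show "0 < snd i \<and> cball (fst i) (snd i) \<subseteq> Op \<and> measure lebesgue (cball (fst i) (snd i) - A) > e * snd i"
          unfolding Op'_def by blast
      qed
      have "measure lebesgue (\<Union>D') \<le> 2/e * measure lebesgue (Op - A)"
        unfolding C'(3) using bound_lemma[OF C'(2) A Op(3) e pw CK'] by simp
      also have "\<dots> \<le> 2/e * \<eta>'" using mOA e by (intro mult_left_mono) auto
      finally show ?thesis .
    qed
    have cD: "countable D" using C(1) by (simp add: D_def)
    have mD: "d \<in> lmeasurable" if "d \<in> D" for d using that by (auto simp: D_def)
    obtain D' where D': "D' \<subseteq> D" "finite D'" "measure lebesgue (\<Union>D) - \<eta>' < measure lebesgue (\<Union>D')"
      using measure_countable_Union_approachable[OF cD \<eta>' mD bound] by blast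
    have mU: "measure lebesgue (\<Union>D) < \<eta>"
    proof -
      have "measure lebesgue (\<Union>D') \<le> 2/e * \<eta>'" using bound D'(1,2) by blast
      then have "measure lebesgue (\<Union>D) < \<eta>' + 2/e * \<eta>'" using D'(3) by linarith
      also have "\<eta>' + 2/e * \<eta>' = \<eta>" using arith_eta[OF e, of \<eta>] by (simp add: \<eta>'_def)
      finally show ?thesis .
    qed
    have bD: "bounded (\<Union>D)"
    proof -
      have "\<Union>D \<subseteq> ball 0 (m+1)" 
      proof
        fix y assume "y \<in> \<Union>D"
        then obtain i where "i \<in> C" "y \<in> cball (fst i) (snd i)" unfolding D_def by blast
        then show "y \<in> ball 0 (m+1)" using CK[of i] unfolding Op'_def by blast
      qed
      then show ?thesis using bounded_ball bounded_subset by blast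
    qed
    have "\<Union>D \<in> sets lebesgue" using cD mD by (intro sets.countable_Union) auto
    then have lD: "\<Union>D \<in> lmeasurable" using bD bounded_set_imp_lmeasurable by blast
    have negR: "negligible (E - \<Union>D)" using C(4) by (simp add: D_def)
    define T where "T = \<Union>D \<union> (E - \<Union>D)"
    have "E \<subseteq> T" by (auto simp: T_def)
    moreover have "T \<in> lmeasurable" unfolding T_def
      using lD negligible_imp_measurable[OF negR] by (rule fmeasurable.Un)
    moreover have "measure lebesgue T \<le> \<eta>"
    proof -
      have "measure lebesgue T \<le> measure lebesgue (\<Union>D) + measure lebesgue (E - \<Union>D)"
        unfolding T_def using lD negligible_imp_measurable[OF negR] by (intro measure_Un_le) auto
      also have "measure lebesgue (E - \<Union>D) = 0" using negR negligible_imp_measure0 by blast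
      finally show ?thesis using mU by linarith
    qed
    ultimately show "\<exists>T. E \<subseteq> T \<and> T \<in> lmeasurable \<and> measure lebesgue T \<le> \<eta>" by blast
  qed
  then show ?thesis unfolding E_def[symmetric] using negligible_outer_le by blast
qed



lemma density_ae:
  fixes A :: "real set"
  assumes A: "A \<in> sets lebesgue"
  shows "negligible {x\<in>A. \<not>(\<forall>e>0. \<exists>\<rho>>0. \<forall>r. 0<r \<and> r<\<rho> \<longrightarrow> measure lebesgue (cball x r - A) \<le> e*r)}"
proof -
  define N where "N = (\<lambda>(k::nat,m::nat). {x\<in>A \<inter> ball 0 (real m). \<forall>\<rho>>0. \<exists>r. 0<r \<and> r<\<rho> \<and> measure lebesgue (cball x r - A) > (1/real (Suc k))*r})"
  have sub: "{x\<in>A. \<not>(\<forall>e>0. \<exists>\<rho>>0. \<forall>r. 0<r \<and> r<\<rho> \<longrightarrow> measure lebesgue (cball x r - A) \<le> e*r)} \<subseteq> \<Union>(N ` UNIV)"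
  proof
    fix x assume "x \<in> {x\<in>A. \<not>(\<forall>e>0. \<exists>\<rho>>0. \<forall>r. 0<r \<and> r<\<rho> \<longrightarrow> measure lebesgue (cball x r - A) \<le> e*r)}"
    then obtain e where e: "e>0" "x\<in>A" "\<forall>\<rho>>0. \<exists>r. 0<r \<and> r<\<rho> \<and> \<not> measure lebesgue (cball x r - A) \<le> e*r"
      by auto
    obtain k where k: "1/real (Suc k) < e" using e(1) by (meson nat_approx_posE)
    obtain m::nat where m: "norm x < real m" using reals_Archimedean2 by blast
    have "x \<in> N (k,m)"
      unfolding N_def
    proof (simp only: case_prod_conv mem_Collect_eq, intro conjI allI impI)
      show "x \<in> A \<inter> ball 0 (real m)" using e(2) m by auto
      fix \<rho> :: real assume "\<rho> > 0"
      then obtain r where r: "0<r" "r<\<rho>" "\<not> measure lebesgue (cball x r - A) \<le> e*r" using e(3) by blast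
      have "(1/real (Suc k))*r \<le> e*r" using k r(1) by (intro mult_right_mono) auto
      then show "\<exists>r. 0<r \<and> r<\<rho> \<and> measure lebesgue (cball x r - A) > (1/real (Suc k))*r"
        using r by (intro exI[of _ r]) auto
    qed
    then show "x \<in> \<Union>(N ` UNIV)" by blast
  qed
  have "negligible (\<Union>(N ` UNIV))"
  proof (rule negligible_countable_Union)
    show "countable (range N)" by simp
    fix S assume "S \<in> range N"
    then obtain k m where "S = N (k,m)" by auto
    then show "negligible S" unfolding N_def using N_negl[OF A, of "1/real (Suc k)" "real m"] by simp
  qed
  then show ?thesis using sub negligible_subset by blast
qed



lemma ratio_to_1:
  fixes A :: "real set" and x :: real and J :: "real \<Rightarrow> real set" and r :: "nat \<Rightarrow> real"
  assumes D: "\<forall>e>0. \<exists>\<rho>>0. \<forall>r. 0<r \<and> r<\<rho> \<longrightarrow> measure lebesgue (cball x r - A) \<le> e*r"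
    and A: "A \<in> sets lebesgue"
    and Jsub: "\<And>t. t > 0 \<Longrightarrow> J t \<subseteq> cball x t"
    and Jm: "\<And>t. t > 0 \<Longrightarrow> J t \<in> lmeasurable \<and> measure lebesgue (J t) = t"
    and rpos: "\<And>n. 0 < r n" and rlim: "r \<longlonglongrightarrow> 0"
  shows "(\<lambda>n. measure lebesgue (A \<inter> J (r n)) / r n) \<longlonglongrightarrow> 1"
proof -
  have key: "measure lebesgue (A \<inter> J t) / t = 1 - measure lebesgue (J t - A) / t" if "t > 0" for t
  proof -
    have m: "J t \<in> lmeasurable" "measure lebesgue (J t) = t" using Jm[OF that] by auto
    have "measure lebesgue (J t) = measure lebesgue ((A \<inter> J t) \<union> (J t - A))"
      by (rule arg_cong[where f="measure lebesgue"]) blast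
    also have "\<dots> = measure lebesgue (A \<inter> J t) + measure lebesgue (J t - A)"
    proof (rule measure_Union)
      show "emeasure lebesgue (A \<inter> J t) \<noteq> \<infinity>"
        using fmeasurableD2[OF fmeasurable_Int_fmeasurable[OF m(1) A]] by (metis inf_commute infinity_ennreal_def)
      show "emeasure lebesgue (J t - A) \<noteq> \<infinity>"
        using fmeasurableD2[OF fmeasurable_Diff[OF m(1) A]] by (metis infinity_ennreal_def)
      show "A \<inter> J t \<in> sets lebesgue" using A m(1) by auto
      show "J t - A \<in> sets lebesgue" using A m(1) by auto
    qed auto
    finally have "t = measure lebesgue (A \<inter> J t) + measure lebesgue (J t - A)" using m(2) by simp
    then show ?thesis using that by (simp add: field_simps)
  qed
  have g0: "(\<lambda>n. measure lebesgue (J (r n) - A) / r n) \<longlonglongrightarrow> 0"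
  proof (rule LIMSEQ_I)
    fix e :: real assume e: "0 < e"
    then obtain \<rho> where \<rho>: "\<rho> > 0" "\<forall>t. 0<t \<and> t<\<rho> \<longrightarrow> measure lebesgue (cball x t - A) \<le> (e/2)*t"
      using D by (meson half_gt_zero)
    obtain N where N: "\<forall>n\<ge>N. norm (r n - 0) < \<rho>" using LIMSEQ_D[OF rlim \<rho>(1)] by blast
    have "norm (measure lebesgue (J (r n) - A) / r n - 0) < e" if "n \<ge> N" for n
    proof -
      have rn: "0 < r n" "r n < \<rho>" using N that rpos[of n] by auto
      have "measure lebesgue (J (r n) - A) \<le> measure lebesgue (cball x (r n) - A)"
      proof (rule measure_mono_fmeasurable)
        show "J (r n) - A \<subseteq> cball x (r n) - A" using Jsub[OF rn(1)] by blast
        show "J (r n) - A \<in> sets lebesgue" using A Jm[OF rn(1)] by auto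
        show "cball x (r n) - A \<in> lmeasurable" using A by (intro fmeasurable_Diff) auto
      qed
      also have "\<dots> \<le> (e/2) * r n" using \<rho>(2) rn by blast
      finally have le: "measure lebesgue (J (r n) - A) \<le> (e/2) * r n" .
      have "measure lebesgue (J (r n) - A) / r n \<le> e/2" using le rn(1) by (simp add: divide_le_eq)
      moreover have "0 \<le> measure lebesgue (J (r n) - A) / r n" using rn(1) by simp
      ultimately have "\<bar>measure lebesgue (J (r n) - A) / r n\<bar> < e" using e by linarith
      then show ?thesis by simp
    qed
    then show "\<exists>N. \<forall>n\<ge>N. norm (measure lebesgue (J (r n) - A) / r n - 0) < e" by blast
  qed
  have "(\<lambda>n. 1 - measure lebesgue (J (r n) - A) / r n) \<longlonglongrightarrow> 1 - 0"
    by (intro tendsto_diff tendsto_const g0)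
  then show ?thesis using key rpos by simp
qed

lemma dens_right:
  fixes A :: "real set"
  assumes D: "\<forall>e>0. \<exists>\<rho>>0. \<forall>r. 0<r \<and> r<\<rho> \<longrightarrow> measure lebesgue (cball x r - A) \<le> e*r"
    and A: "A \<in> sets lebesgue"
  shows "right_density_point A x"
  unfolding right_density_point_def
proof (intro allI impI)
  fix r :: "nat \<Rightarrow> real" assume r: "(\<forall>n. 0 < r n) \<and> decseq r \<and> r \<longlonglongrightarrow> 0"
  show "(\<lambda>n. measure lebesgue (A \<inter> {x..x + r n}) / r n) \<longlonglongrightarrow> 1"
  proof (rule ratio_to_1[OF D A, of "\<lambda>t. {x..x+t}"])
    show "\<And>t. t > 0 \<Longrightarrow> {x..x+t} \<subseteq> cball x t" by (auto simp: cball_eq_atLeastAtMost)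
    show "\<And>t. t > 0 \<Longrightarrow> {x..x+t} \<in> lmeasurable \<and> measure lebesgue {x..x+t} = t" by simp
  qed (use r in auto)
qed

lemma dens_left:
  fixes A :: "real set"
  assumes D: "\<forall>e>0. \<exists>\<rho>>0. \<forall>r. 0<r \<and> r<\<rho> \<longrightarrow> measure lebesgue (cball x r - A) \<le> e*r"
    and A: "A \<in> sets lebesgue"
  shows "left_density_point A x"
  unfolding left_density_point_def
proof (intro allI impI)
  fix r :: "nat \<Rightarrow> real" assume r: "(\<forall>n. 0 < r n) \<and> decseq r \<and> r \<longlonglongrightarrow> 0"
  show "(\<lambda>n. measure lebesgue (A \<inter> {x - r n..x}) / r n) \<longlonglongrightarrow> 1"
  proof (rule ratio_to_1[OF D A, of "\<lambda>t. {x-t..x}"])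
    show "\<And>t. t > 0 \<Longrightarrow> {x-t..x} \<subseteq> cball x t" by (auto simp: cball_eq_atLeastAtMost)
    show "\<And>t. t > 0 \<Longrightarrow> {x-t..x} \<in> lmeasurable \<and> measure lebesgue {x-t..x} = t" by simp
  qed (use r in auto)
qed



theorem lemma4p1:
  fixes U Ht :: "real set" and \<epsilon> :: real
  assumes "open U" and "Ht \<subseteq> U" and "Ht \<in> sets lebesgue" and "\<epsilon> > 0"
  shows "\<exists>H. open H \<and> H \<subseteq> U \<and> emeasure lebesgue (Ht - H) = 0 \<and>
    (\<forall>I \<in> components H. bounded I \<longrightarrow>
       (\<forall>a b. I = {a<..<b} \<longrightarrow>
          right_density_point Ht a \<and> left_density_point Ht b \<and>
          (\<forall>r. 0 < r \<and> r < b - a \<longrightarrow>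
             max (measure lebesgue ({a<..<a + r} - Ht) / r)
                 (measure lebesgue ({b - r<..<b} - Ht) / r) < \<epsilon>)))"
proof -
  note U = assms(1) and HU = assms(2) and Hm = assms(3) and \<epsilon> = assms(4)
  define Dn where "Dn = {x. \<forall>e>0. \<exists>\<rho>>0. \<forall>r. 0<r \<and> r<\<rho> \<longrightarrow> measure lebesgue (cball x r - Ht) \<le> e*r}"
  define \<delta> where "\<delta> = \<epsilon>/2"
  have \<delta>: "\<delta> > 0" "\<delta> < \<epsilon>" using \<epsilon> by (auto simp: \<delta>_def)
  define G where "G n = {x \<in> Dn. cball x (1/real (Suc n)) \<subseteq> U \<and> (\<forall>r. 0<r \<and> r \<le> 1/real (Suc n) \<longrightarrow> measure lebesgue (cball x r - Ht) \<le> \<delta>*r)}" for n::nat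
  define Acc where "Acc n = {x\<in>G n. \<forall>h>0. (\<exists>c\<in>G n. x-h<c \<and> c<x) \<and> (\<exists>c\<in>G n. x<c \<and> c<x+h)}" for n
  define S where "S = (\<Union>n. Acc n)"
  define RI where "RI n = {x\<in>G n. \<exists>h>0. \<forall>c\<in>G n. \<not> (x < c \<and> c < x + h)}" for n
  define LI where "LI n = {x\<in>G n. \<exists>h>0. \<forall>c\<in>G n. \<not> (x - h < c \<and> c < x)}" for n
  have negS: "negligible (Ht - S)"
  proof -
    have "Ht - S \<subseteq> {x\<in>Ht. \<not>(\<forall>e>0. \<exists>\<rho>>0. \<forall>r. 0<r \<and> r<\<rho> \<longrightarrow> measure lebesgue (cball x r - Ht) \<le> e*r)} \<union> \<Union>(range RI) \<union> \<Union>(range LI)"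
    proof
      fix x assume x: "x \<in> Ht - S"
      show "x \<in> {x\<in>Ht. \<not>(\<forall>e>0. \<exists>\<rho>>0. \<forall>r. 0<r \<and> r<\<rho> \<longrightarrow> measure lebesgue (cball x r - Ht) \<le> e*r)} \<union> \<Union>(range RI) \<union> \<Union>(range LI)"
      proof (cases "x \<in> Dn")
        case False then show ?thesis using x by (auto simp: Dn_def)
      next
        case True
        then obtain \<rho> where \<rho>: "\<rho> > 0" "\<forall>r. 0<r \<and> r<\<rho> \<longrightarrow> measure lebesgue (cball x r - Ht) \<le> \<delta>*r"
          using \<delta>(1) unfolding Dn_def by blast
        have xU: "x \<in> U" using x HU by blast
        obtain \<rho>0 where \<rho>0: "\<rho>0 > 0" "ball x \<rho>0 \<subseteq> U" by (rule openE[OF U xU])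
        have "min \<rho> \<rho>0 > 0" using \<rho>(1) \<rho>0(1) by simp
        then obtain n where n: "1/real (Suc n) < min \<rho> \<rho>0" using nat_approx_posE by blast
        have "cball x (1/real (Suc n)) \<subseteq> ball x \<rho>0" using n by (simp add: cball_subset_ball_iff)
        then have "x \<in> G n" unfolding G_def using True \<rho>(2) \<rho>0(2) n by auto
        moreover have "x \<notin> Acc n" using x unfolding S_def by blast
        ultimately have "x \<in> RI n \<or> x \<in> LI n" unfolding Acc_def RI_def LI_def by auto
        then show ?thesis by blast
      qed
    qed
    moreover have "negligible {x\<in>Ht. \<not>(\<forall>e>0. \<exists>\<rho>>0. \<forall>r. 0<r \<and> r<\<rho> \<longrightarrow> measure lebesgue (cball x r - Ht) \<le> e*r)}"
      by (rule density_ae[OF Hm])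
    moreover have "negligible (\<Union>(range RI))"
    proof (rule negligible_countable_Union)
      show "countable (range RI)" by simp
      fix T assume "T \<in> range RI"
      then obtain n where "T = RI n" by blast
      then show "negligible T" unfolding RI_def using countable_negl[OF right_isolated_countable[of "G n"]] by simp
    qed
    moreover have "negligible (\<Union>(range LI))"
    proof (rule negligible_countable_Union)
      show "countable (range LI)" by simp
      fix T assume "T \<in> range LI"
      then obtain n where "T = LI n" by blast
      then show "negligible T" unfolding LI_def using countable_negl[OF left_isolated_countable[of "G n"]] by simp
    qed
    ultimately show ?thesis by (meson negligible_Un negligible_subset)
  qed
  define K where "K = {(c,d). \<exists>n. c \<in> G n \<and> d \<in> G n \<and> c < d \<and> d - c < 1/real (Suc n)}"
  define ca where "ca i = (fst i + snd i)/2" for i :: "real \<times> real"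
  define ra where "ra i = (snd i - fst i)/2" for i :: "real \<times> real"
  define iv where "iv i = {fst i<..<snd i}" for i :: "real \<times> real"
  have ball_iv: "ball (ca i) (ra i) = iv i" for i
    unfolding ca_def ra_def iv_def by (simp add: greaterThanLessThan_eq_ball)
  have fine: "\<exists>i. i \<in> K \<and> x \<in> ball (ca i) (ra i) \<and> ra i < d" if "x \<in> S" "0 < d" for x d
  proof -
    obtain n where n: "x \<in> Acc n" using \<open>x \<in> S\<close> unfolding S_def by blast
    define h where "h = min d (1/real (Suc n)) / 2"
    have h: "h > 0" using that(2) by (simp add: h_def)
    obtain c where c: "c \<in> G n" "x - h < c" "c < x" using n h unfolding Acc_def by blast
    obtain c' where c': "c' \<in> G n" "x < c'" "c' < x + h" using n h unfolding Acc_def by blast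
    have m1: "min d (1/real (Suc n)) \<le> 1/real (Suc n)" "min d (1/real (Suc n)) \<le> d" by auto
    have "h \<le> 1/real (Suc n) / 2" unfolding h_def by (rule divide_right_mono[OF m1(1)]) simp
    moreover have "h \<le> d / 2" unfolding h_def by (rule divide_right_mono[OF m1(2)]) simp
    ultimately have "h \<le> 1/real (Suc n) / 2" "h \<le> d / 2" by auto
    have hh: "\<And>a b::real. a \<le> b/2 \<Longrightarrow> 2*a \<le> b" by linarith
    have h2: "2*h \<le> 1/real (Suc n)" by (rule hh) fact
    have "c' - c < 2*h" using c c' by linarith
    then have "c' - c < 1/real (Suc n)" using h2 by linarith
    moreover have "c < c'" using c c' by linarith
    ultimately have "(c,c') \<in> K" using c(1) c'(1) unfolding K_def by blast
    moreover have "x \<in> ball (ca (c,c')) (ra (c,c'))" unfolding ball_iv iv_def using c c' by simp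
    moreover have "ra (c,c') < d" unfolding ra_def using c c' \<open>h \<le> d/2\<close> by simp
    ultimately show ?thesis by blast
  qed
  obtain C where C: "countable C" "C \<subseteq> K"
     "pairwise (\<lambda>i j. disjnt (ball (ca i) (ra i)) (ball (ca j) (ra j))) C"
     "negligible (S - (\<Union>i\<in>C. ball (ca i) (ra i)))"
    using Vitali_covering_theorem_balls[of S K ca ra, OF fine] by blast
  define H where "H = (\<Union>i\<in>C. iv i)"
  have pw: "pairwise (\<lambda>i j. disjnt (iv i) (iv j)) C" using C(3) by (simp add: ball_iv)
  have CK: "\<exists>n. fst i \<in> G n \<and> snd i \<in> G n \<and> fst i < snd i \<and> snd i - fst i < 1/real (Suc n)" if "i \<in> C" for i
  proof -
    have "i \<in> K" using that C(2) by blast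
    then show ?thesis unfolding K_def by (simp add: case_prod_beta)
  qed
  have openH: "open H" unfolding H_def iv_def by auto
  have HsubU: "H \<subseteq> U"
  proof
    fix y assume "y \<in> H"
    then obtain i where i: "i \<in> C" "y \<in> iv i" unfolding H_def by blast
    obtain n where n: "fst i \<in> G n" "snd i - fst i < 1/real (Suc n)" using CK[OF i(1)] by blast
    have "y \<in> cball (fst i) (1/real (Suc n))" using i(2) n(2) unfolding iv_def by (auto simp: dist_real_def)
    then show "y \<in> U" using n(1) unfolding G_def by blast
  qed
  have null: "emeasure lebesgue (Ht - H) = 0"
  proof -
    have "Ht - H \<subseteq> (Ht - S) \<union> (S - (\<Union>i\<in>C. ball (ca i) (ra i)))" unfolding H_def ball_iv by blast
    then have "negligible (Ht - H)" using negS C(4) by (meson negligible_Un negligible_subset)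
    moreover have "Ht - H \<in> sets lebesgue" using Hm openH by (intro sets.Diff) (auto intro: borel_open)
    ultimately show ?thesis using negligible_iff_emeasure0 by blast
  qed
  have endpoints: "fst i \<notin> H \<and> snd i \<notin> H" if "i \<in> C" for i
  proof -
    have lt: "fst i < snd i" using CK[OF that] by blast
    have "False" if "z \<in> H" and z: "z = fst i \<or> z = snd i" for z
    proof -
      obtain j where j: "j \<in> C" "z \<in> iv j" using \<open>z \<in> H\<close> unfolding H_def by blast
      have "i \<noteq> j" using j(2) z unfolding iv_def by auto
      then have dj: "iv i \<inter> iv j = {}" using pw \<open>i \<in> C\<close> j(1) unfolding pairwise_def disjnt_def by blast
      show False
      proof (cases "z = fst i")
        case True
        define w where "w = (fst i + min (snd i) (snd j))/2"
        have "w \<in> iv i \<inter> iv j" using j(2) True lt unfolding w_def iv_def by auto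
        then show False using dj by blast
      next
        case False
        then have zs: "z = snd i" using z by blast
        define w where "w = (max (fst i) (fst j) + snd i)/2"
        have "w \<in> iv i \<inter> iv j" using j(2) zs lt unfolding w_def iv_def by auto
        then show False using dj by blast
      qed
    qed
    then show ?thesis by blast
  qed
  have comps: "\<forall>I \<in> components H. bounded I \<longrightarrow>
       (\<forall>a b. I = {a<..<b} \<longrightarrow>
          right_density_point Ht a \<and> left_density_point Ht b \<and>
          (\<forall>r. 0 < r \<and> r < b - a \<longrightarrow>
             max (measure lebesgue ({a<..<a + r} - Ht) / r)
                 (measure lebesgue ({b - r<..<b} - Ht) / r) < \<epsilon>))"
  proof (intro ballI impI allI)
    fix I a b assume I: "I \<in> components H" and "bounded I" and Iab: "I = {a<..<b}"
    have "I \<noteq> {}" using I in_components_nonempty by blast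
    then have ab: "a < b" using Iab by auto
    define x where "x = (a+b)/2"
    have "x \<in> I" using ab Iab by (simp add: x_def)
    then have "x \<in> H" using I in_components_subset by blast
    then obtain i where i: "i \<in> C" "x \<in> iv i" unfolding H_def by blast
    have "iv i \<subseteq> I"
    proof (rule components_maximal[OF I])
      show "connected (iv i)" unfolding iv_def by (simp add: is_interval_connected)
      show "iv i \<subseteq> H" using i(1) unfolding H_def by blast
      show "I \<inter> iv i \<noteq> {}" using i(2) \<open>x \<in> I\<close> by blast
    qed
    moreover have "I \<subseteq> iv i"
    proof
      fix y assume y: "y \<in> I"
      show "y \<in> iv i"
      proof (rule ccontr)
        assume "y \<notin> iv i"
        then have "y \<le> fst i \<or> y \<ge> snd i" unfolding iv_def by auto
        then have "fst i \<in> I \<or> snd i \<in> I" using y i(2) \<open>x \<in> I\<close> Iab unfolding iv_def by auto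
        then show False using endpoints[OF i(1)] I in_components_subset by blast
      qed
    qed
    ultimately have "I = iv i" by blast
    then have eq: "{a<..<b} = {fst i<..<snd i}" using Iab iv_def by simp
    have lt: "fst i < snd i" using CK[OF i(1)] by blast
    have "a = fst i" using cInf_greaterThanLessThan[OF ab] cInf_greaterThanLessThan[OF lt] eq by simp
    moreover have "b = snd i" using cSup_greaterThanLessThan[OF ab] cSup_greaterThanLessThan[OF lt] eq by simp
    ultimately obtain n where n: "a \<in> G n" "b \<in> G n" "b - a < 1/real (Suc n)" using CK[OF i(1)] by blast
    have aD: "a \<in> Dn" and bD: "b \<in> Dn" using n unfolding G_def by auto
    show "right_density_point Ht a \<and> left_density_point Ht b \<and>
          (\<forall>r. 0 < r \<and> r < b - a \<longrightarrow>
             max (measure lebesgue ({a<..<a + r} - Ht) / r)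
                 (measure lebesgue ({b - r<..<b} - Ht) / r) < \<epsilon>)"
    proof (intro conjI allI impI)
      show "right_density_point Ht a" using aD Hm unfolding Dn_def by (intro dens_right) auto
      show "left_density_point Ht b" using bD Hm unfolding Dn_def by (intro dens_left) auto
      fix r assume r: "0 < r \<and> r < b - a"
      then have r1: "r \<le> 1/real (Suc n)" using n(3) by linarith
      have ma: "measure lebesgue ({a<..<a + r} - Ht) \<le> \<delta> * r"
      proof -
        have "measure lebesgue ({a<..<a + r} - Ht) \<le> measure lebesgue (cball a r - Ht)"
        proof (rule measure_mono_fmeasurable)
          show "{a<..<a + r} - Ht \<subseteq> cball a r - Ht" by (auto simp: cball_eq_atLeastAtMost)
          show "{a<..<a + r} - Ht \<in> sets lebesgue" using Hm by auto
          show "cball a r - Ht \<in> lmeasurable" using Hm by (intro fmeasurable_Diff) auto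
        qed
        also have "\<dots> \<le> \<delta> * r" using n(1) r r1 unfolding G_def by blast
        finally show ?thesis .
      qed
      have mb: "measure lebesgue ({b - r<..<b} - Ht) \<le> \<delta> * r"
      proof -
        have "measure lebesgue ({b - r<..<b} - Ht) \<le> measure lebesgue (cball b r - Ht)"
        proof (rule measure_mono_fmeasurable)
          show "{b - r<..<b} - Ht \<subseteq> cball b r - Ht" by (auto simp: cball_eq_atLeastAtMost)
          show "{b - r<..<b} - Ht \<in> sets lebesgue" using Hm by auto
          show "cball b r - Ht \<in> lmeasurable" using Hm by (intro fmeasurable_Diff) auto
        qed
        also have "\<dots> \<le> \<delta> * r" using n(2) r r1 unfolding G_def by blast
        finally show ?thesis .
      qed
      have "measure lebesgue ({a<..<a + r} - Ht) / r \<le> \<delta>" using ma r by (simp add: divide_le_eq)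
      moreover have "measure lebesgue ({b - r<..<b} - Ht) / r \<le> \<delta>" using mb r by (simp add: divide_le_eq)
      ultimately show "max (measure lebesgue ({a<..<a + r} - Ht) / r)
                 (measure lebesgue ({b - r<..<b} - Ht) / r) < \<epsilon>" using \<delta> by simp
    qed
  qed
  show ?thesis using openH HsubU null comps by blast
qed


end
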